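(* Let $\mathcal{H}$ be a finite-dimensional complex Hilbert space and $k\ge 2$. (i) A bosonic pure state $\rho\in\mathbb{P}(\mathcal{H}^{\vee k})$ is entangled if and only if it does not lie in the range of the map $\operatorname{Seg}^\vee_k:\mathbb{P}\mathcal{H}\to\mathbb{P}(\mathcal{H}^{\vee k})$, $\rho_x\mapsto\rho_{x^{k}}$, where $x^k=x\vee\cdots\vee x=x\otimes\cdots\otimes x$ ($k$ factors). (ii) A fermionic pure state $\rho\in\mathbb{P}(\mathcal{H}^{\wedge k})$ is entangled if and only if it does not lie in the range of the map $\operatorname{Seg}^\wedge_k:(\mathbb{P}\mathcal{H})^{\times k}_\circ\to\mathbb{P}(\mathcal{H}^{\wedge k})$, $(\rho_{x_1},\dots,\rho_{x_k})\mapsto\rho_{x_1\wedge\cdots\wedge x_k}$. (iii) A mixed bosonic (resp. fermionic) state on $\mathcal{H}^{\vee k}$ (resp. $\mathcal{H}^{\wedge k}$) is entangled if and only if it lies outside the convex hull of the range of $\operatorname{Seg}^\vee_k$ (resp. $\operatorname{Seg}^\wedge_k$), where pure states are identified with rank-one orthogonal projectors.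
   Context: For $0\neq x$ in a Hilbert space, $\rho_x=|x\rangle\langle x|/\|x\|^2$; pure states on a Hilbert space $V$ are identified with $\mathbb{P}V$ via $x\mapsto\rho_x$. $\mathcal{H}^{\vee k}\subset\mathcal{H}^{\otimes k}$ (resp. $\mathcal{H}^{\wedge k}$) is the subspace of totally symmetric (resp. antisymmetric) tensors, with $f_1\vee\cdots\vee f_k=\frac{1}{k!}\sum_{\sigma\in S_k}f_{\sigma(1)}\otimes\cdots\otimes f_{\sigma(k)}$ and $f_1\wedge\cdots\wedge f_k=\frac{1}{k!}\sum_{\sigma}(-1)^\sigma f_{\sigma(1)}\otimes\cdots\otimes f_{\sigma(k)}$. $(\mathbb{P}\mathcal{H})^{\times k}_\circ=\{(\rho_{x_1},\dots,\rho_{x_k}): x_1\wedge\cdots\wedge x_k\neq0\}$. S-rank: for $u\in\mathcal{H}^{\otimes k}$, the contraction $\imath_\nu u$ with $\nu\in\mathcal{H}^{\otimes(k-1)}$ is the linear extension of $\imath_{g_1\otimes\cdots\otimes g_{k-1}}(f_1\otimes\cdots\otimes f_k)=\prod_{i=1}^{k-1}\langle f_i|g_i\rangle\, f_k$; for $\sigma\in S_k$, $\sigma(f_1\otimes\cdots\otimes f_k)=f_{\sigma(1)}\otimes\cdots\otimes f_{\sigma(k)}$. The S-rank of $u$ is the maximum over $\sigma\in S_k$ of $\dim\{\imath_\nu\sigma(u):\nu\in\mathcal{H}^{\otimes(k-1)}\}$. A simple symmetric (resp. antisymmetric) tensor is a nonzero element of $\mathcal{H}^{\vee k}$ (resp.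 $\mathcal{H}^{\wedge k}$) of minimal S-rank among nonzero elements of that space. A bosonic (fermionic) pure state $\rho_x$, $0\ne x\in\mathcal{H}^{\vee k}$ (resp. $\mathcal{H}^{\wedge k}$), is simple if $x$ is a simple symmetric (resp. antisymmetric) tensor, and entangled otherwise; a mixed bosonic (fermionic) state is simple if it is a convex combination of simple bosonic (fermionic) pure states, and entangled otherwise. *)

theory Defs
  imports "HOL-Analysis.Analysis" "HOL-Combinatorics.Permutations"
begin

text \<open>The Hilbert space H is complex^'n with 'n a finite type (finite-dimensional).  An element of the k-fold tensor power of H
  is represented by its coordinate function on multi-indices, i.e. a function
  'n list \<Rightarrow> complex vanishing on lists whose length is not k.
  Operators on the k-fold tensor power are matrices indexed by pairs of multi-indices.\<close>

type_synonym 'n tensor = "'n list \<Rightarrow> complex"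
type_synonym 'n tmatrix = "'n list \<Rightarrow> 'n list \<Rightarrow> complex"

definition idx :: "nat \<Rightarrow> 'n list set" where
  "idx k = {is. length is = k}"

definition tens :: "nat \<Rightarrow> ('n::finite) tensor set" where
  "tens k = {u. \<forall>is. length is \<noteq> k \<longrightarrow> u is = 0}"

definition tprod :: "nat \<Rightarrow> (nat \<Rightarrow> complex^'n) \<Rightarrow> ('n::finite) tensor" where
  "tprod k f = (\<lambda>is. if length is = k then (\<Prod>j<k. f j $ (is ! j)) else 0)"

text \<open>Action of a permutation sigma of {0..<k}:
  sigma(f_0 \<otimes> ... \<otimes> f_(k-1)) = f_sigma(0) \<otimes> ... \<otimes> f_sigma(k-1).\<close>
definition tperm :: "(nat \<Rightarrow> nat) \<Rightarrow> ('n::finite) tensor \<Rightarrow> 'n tensor" where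
  "tperm \<sigma> u = (\<lambda>is. u (permute_list (inv \<sigma>) is))"

definition sym_tens :: "nat \<Rightarrow> ('n::finite) tensor set" where
  "sym_tens k = {u \<in> tens k. \<forall>\<sigma>. \<sigma> permutes {..<k} \<longrightarrow> tperm \<sigma> u = u}"

definition asym_tens :: "nat \<Rightarrow> ('n::finite) tensor set" where
  "asym_tens k = {u \<in> tens k. \<forall>\<sigma>. \<sigma> permutes {..<k} \<longrightarrow>
      tperm \<sigma> u = (\<lambda>is. of_int (sign \<sigma>) * u is)}"

definition wedge :: "nat \<Rightarrow> (nat \<Rightarrow> complex^'n) \<Rightarrow> ('n::finite) tensor" where
  "wedge k f = (\<lambda>is. (1 / of_nat (fact k)) *
      (\<Sum>\<sigma>\<in>{\<sigma>. \<sigma> permutes {..<k}}. of_int (sign \<sigma>) * tprod k (f \<circ> \<sigma>) is))"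

definition tpow :: "nat \<Rightarrow> complex^'n \<Rightarrow> ('n::finite) tensor" where
  "tpow k x = tprod k (\<lambda>_. x)"

text \<open>Contraction i_nu u for u in the k-fold and nu in the (k-1)-fold tensor power,
  linear extension of i_(g_1..g_(k-1)) (f_1..f_k) = prod <f_i|g_i> f_k,
  with <f|g> = sum_i f_i * conj(g_i).\<close>
definition contr :: "nat \<Rightarrow> ('n::finite) tensor \<Rightarrow> 'n tensor \<Rightarrow> complex^'n" where
  "contr k \<nu> u = (\<chi> j. \<Sum>is\<in>idx (k - 1). u (is @ [j]) * cnj (\<nu> is))"

definition srank :: "nat \<Rightarrow> ('n::finite) tensor \<Rightarrow> nat" where
  "srank k u = Max ((\<lambda>\<sigma>. vec.dim {contr k \<nu> (tperm \<sigma> u) | \<nu>. \<nu> \<in> tens (k - 1)})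
                     ` {\<sigma>. \<sigma> permutes {..<k}})"

definition simple_sym :: "nat \<Rightarrow> ('n::finite) tensor \<Rightarrow> bool" where
  "simple_sym k u \<longleftrightarrow> u \<in> sym_tens k \<and> u \<noteq> (\<lambda>_. 0) \<and>
     (\<forall>v :: 'n tensor \<in> sym_tens k. v \<noteq> (\<lambda>_. 0) \<longrightarrow> srank k u \<le> srank k v)"

definition simple_asym :: "nat \<Rightarrow> ('n::finite) tensor \<Rightarrow> bool" where
  "simple_asym k u \<longleftrightarrow> u \<in> asym_tens k \<and> u \<noteq> (\<lambda>_. 0) \<and>
     (\<forall>v :: 'n tensor \<in> asym_tens k. v \<noteq> (\<lambda>_. 0) \<longrightarrow> srank k u \<le> srank k v)"

definition tnorm2 :: "nat \<Rightarrow> ('n::finite) tensor \<Rightarrow> real" where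
  "tnorm2 k x = (\<Sum>is\<in>idx k. (cmod (x is))\<^sup>2)"

definition pstate :: "nat \<Rightarrow> ('n::finite) tensor \<Rightarrow> 'n tmatrix" where
  "pstate k x = (\<lambda>is js. x is * cnj (x js) / complex_of_real (tnorm2 k x))"

definition bos_pure :: "nat \<Rightarrow> ('n::finite) tmatrix \<Rightarrow> bool" where
  "bos_pure k \<rho> \<longleftrightarrow> (\<exists>x \<in> sym_tens k. x \<noteq> (\<lambda>_. 0) \<and> \<rho> = pstate k x)"

definition ferm_pure :: "nat \<Rightarrow> ('n::finite) tmatrix \<Rightarrow> bool" where
  "ferm_pure k \<rho> \<longleftrightarrow> (\<exists>x \<in> asym_tens k. x \<noteq> (\<lambda>_. 0) \<and> \<rho> = pstate k x)"

definition simple_bos_pure :: "nat \<Rightarrow> ('n::finite) tmatrix \<Rightarrow> bool" where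
  "simple_bos_pure k \<rho> \<longleftrightarrow> (\<exists>x. simple_sym k x \<and> \<rho> = pstate k x)"

definition simple_ferm_pure :: "nat \<Rightarrow> ('n::finite) tmatrix \<Rightarrow> bool" where
  "simple_ferm_pure k \<rho> \<longleftrightarrow> (\<exists>x. simple_asym k x \<and> \<rho> = pstate k x)"

definition seg_sym_range :: "nat \<Rightarrow> ('n::finite) tmatrix set" where
  "seg_sym_range k = {pstate k (tpow k x) | x. x \<noteq> 0}"

definition seg_asym_range :: "nat \<Rightarrow> ('n::finite) tmatrix set" where
  "seg_asym_range k = {pstate k (wedge k xs) | xs. wedge k xs \<noteq> (\<lambda>_. 0)}"

definition cconv :: "('n::finite) tmatrix set \<Rightarrow> 'n tmatrix set" where
  "cconv S = {\<rho>. \<exists>m (p :: nat \<Rightarrow> real) \<tau>. (\<forall>i<m. 0 \<le> p i \<and> \<tau> i \<in> S) \<and>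
       (\<Sum>i<m. p i) = 1 \<and> \<rho> = (\<lambda>is js. \<Sum>i<m. complex_of_real (p i) * \<tau> i is js)}"

definition dens :: "nat \<Rightarrow> ('n::finite) tmatrix \<Rightarrow> bool" where
  "dens k \<rho> \<longleftrightarrow> (\<forall>is js. (length is \<noteq> k \<or> length js \<noteq> k) \<longrightarrow> \<rho> is js = 0) \<and>
     (\<forall>v. let q = (\<Sum>is\<in>idx k. \<Sum>js\<in>idx k. cnj (v is) * \<rho> is js * v js)
          in Im q = 0 \<and> Re q \<ge> 0) \<and>
     (\<Sum>is\<in>idx k. \<rho> is is) = 1"

definition apply_op :: "nat \<Rightarrow> ('n::finite) tmatrix \<Rightarrow> 'n tensor \<Rightarrow> 'n tensor" where
  "apply_op k \<rho> v = (\<lambda>is. \<Sum>js\<in>idx k. \<rho> is js * v js)"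

definition bos_mixed :: "nat \<Rightarrow> ('n::finite) tmatrix \<Rightarrow> bool" where
  "bos_mixed k \<rho> \<longleftrightarrow> dens k \<rho> \<and> (\<forall>v. apply_op k \<rho> v \<in> sym_tens k)"

definition ferm_mixed :: "nat \<Rightarrow> ('n::finite) tmatrix \<Rightarrow> bool" where
  "ferm_mixed k \<rho> \<longleftrightarrow> dens k \<rho> \<and> (\<forall>v. apply_op k \<rho> v \<in> asym_tens k)"

definition simple_bos_mixed :: "nat \<Rightarrow> ('n::finite) tmatrix \<Rightarrow> bool" where
  "simple_bos_mixed k \<rho> \<longleftrightarrow> \<rho> \<in> cconv {\<sigma>. simple_bos_pure k \<sigma>}"

definition simple_ferm_mixed :: "nat \<Rightarrow> ('n::finite) tmatrix \<Rightarrow> bool" where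
  "simple_ferm_mixed k \<rho> \<longleftrightarrow> \<rho> \<in> cconv {\<sigma>. simple_ferm_pure k \<sigma>}"

end

theory Submission
  imports Defs
begin


lemma finite_idx[simp]: "finite (idx k :: ('n::finite) list set)"
proof -
  have "idx k = {xs :: 'n list. set xs \<subseteq> UNIV \<and> length xs = k}" by (auto simp: idx_def)
  then show ?thesis using finite_lists_length_eq[of "UNIV::'n set" k] by simp
qed

definition slice :: "('n::finite) tensor \<Rightarrow> 'n list \<Rightarrow> complex^'n" where
  "slice u is = (\<chi> j. u (is @ [j]))"

definition W :: "nat \<Rightarrow> ('n::finite) tensor \<Rightarrow> (complex^'n) set" where
  "W k u = {contr k \<nu> u | \<nu>. \<nu> \<in> tens (k - 1)}"

lemma contr_eq: "contr k \<nu> u = (\<Sum>is\<in>idx (k-1). cnj (\<nu> is) *s slice u is)"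
  unfolding contr_def slice_def vec_eq_iff by (simp add: sum_component mult_ac)

lemma slice_in_W: assumes "is \<in> idx (k-1)" shows "slice u is \<in> W k u"
proof -
  let ?nu = "\<lambda>l. if l = is then 1 else (0::complex)"
  have a: "?nu \<in> tens (k-1)" using assms by (auto simp: tens_def idx_def)
  have "contr k ?nu u = (\<Sum>l\<in>idx (k-1). (if l = is then slice u is else 0))"
    unfolding contr_eq by (rule sum.cong) auto
  also have "\<dots> = slice u is" using assms by simp
  finally have b: "contr k ?nu u = slice u is" .
  show ?thesis unfolding W_def by (rule CollectI, rule exI[of _ ?nu]) (use a b in auto)
qed

lemma W_sub: assumes "\<And>is. is \<in> idx (k-1) \<Longrightarrow> slice u is \<in> vec.span S"
  shows "W k u \<subseteq> vec.span S"
  using assms unfolding W_def contr_eq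
  by (auto intro!: vec.span_sum vec.span_scale)

lemma tperm_id: "tperm id u = u" by (simp add: tperm_def permute_list_def map_nth)

lemma srank_ge: "vec.dim (W k u) \<le> srank k u"
proof -
  have f: "finite {\<sigma>. \<sigma> permutes {..<k}}" by (simp add: finite_permutations)
  have m: "vec.dim (W k (tperm id u)) \<in> (\<lambda>\<sigma>. vec.dim {contr k \<nu> (tperm \<sigma> u) | \<nu>. \<nu> \<in> tens (k - 1)}) ` {\<sigma>. \<sigma> permutes {..<k}}"
    unfolding W_def using permutes_id by blast
  show ?thesis unfolding srank_def
    using Max_ge[OF finite_imageI[OF f] m] by (simp only: tperm_id)
qed

lemma srank_le: assumes "\<And>\<sigma>. \<sigma> permutes {..<k} \<Longrightarrow> vec.dim (W k (tperm \<sigma> u)) \<le> b"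
  shows "srank k u \<le> b"
  unfolding srank_def using assms permutes_id
  by (subst Max_le_iff) (auto simp: finite_permutations W_def intro: permutes_id)


lemma slice_tprod: fixes g :: "nat \<Rightarrow> complex^'n::finite" and "is" :: "'n list"
  assumes "length is = m"
  shows "slice (tprod (Suc m) g) is = (\<Prod>p<m. g p $ (is!p)) *s g m"
proof -
  have "(\<Prod>p<Suc m. g p $ ((is @ [j]) ! p)) = (\<Prod>p<m. g p $ (is ! p)) * g m $ j" for j
  proof -
    have "(\<Prod>p<Suc m. g p $ ((is @ [j]) ! p)) = (\<Prod>p<m. g p $ ((is @ [j]) ! p)) * g m $ j"
      using assms by (simp only: prod.lessThan_Suc) (simp add: nth_append)
    also have "(\<Prod>p<m. g p $ ((is @ [j]) ! p)) = (\<Prod>p<m. g p $ (is ! p))"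
      using assms by (intro prod.cong) (auto simp: nth_append)
    finally show ?thesis .
  qed
  then show ?thesis using assms by (simp add: slice_def tprod_def vec_eq_iff)
qed

lemma transpose_permutes: assumes "p \<le> m" shows "Transposition.transpose p m permutes {..<Suc m}"
  using assms by (intro permutes_swap_id) auto

lemma pl_pl: assumes "length l = Suc m" "p \<le> m"
  shows "permute_list (Transposition.transpose p m) (permute_list (Transposition.transpose p m) l) = l"
proof -
  have P: "Transposition.transpose p m permutes {..<length l}" using assms transpose_permutes[of p m] by simp
  have P': "Transposition.transpose p m permutes {..<length (permute_list (Transposition.transpose p m) l)}" using P by simp
  show ?thesis
  proof (rule nth_equalityI)
    fix i assume "i < length (permute_list (Transposition.transpose p m) (permute_list (Transposition.transpose p m) l))"
    then have i: "i < length l" by simp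
    then have "Transposition.transpose p m i < length l" using permutes_in_image[OF P] by simp
    then show "permute_list (Transposition.transpose p m) (permute_list (Transposition.transpose p m) l) ! i = l ! i"
      using i by (simp add: permute_list_nth[OF P] permute_list_nth[OF P'])
  qed simp
qed

lemma pl_upd: assumes "length l = Suc m" "p \<le> m"
  shows "permute_list (Transposition.transpose p m) (l[p:=j]) = butlast (permute_list (Transposition.transpose p m) l) @ [j]"
proof -
  let ?t = "Transposition.transpose p m"
  have P: "?t permutes {..<length l}" using assms transpose_permutes[of p m] by simp
  have P': "?t permutes {..<length (l[p:=j])}" using P by simp
  show ?thesis
  proof (rule nth_equalityI)
    show "length (permute_list ?t (l[p := j])) = length (butlast (permute_list ?t l) @ [j])"
      using assms by simp
    fix i assume i: "i < length (permute_list ?t (l[p := j]))"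
    then have i': "i < Suc m" using assms by simp
    show "permute_list ?t (l[p := j]) ! i = (butlast (permute_list ?t l) @ [j]) ! i"
    proof (cases "i = m")
      case True then show ?thesis using assms i'
        by (simp add: permute_list_nth[OF P'] nth_append)
    next
      case False
      then have "i < length (butlast (permute_list ?t l))" using i' assms by simp
      moreover have "?t i \<noteq> p" using False by (auto simp: Transposition.transpose_def)
      ultimately show ?thesis using assms i' False
        by (auto simp: permute_list_nth[OF P'] permute_list_nth[OF P] nth_append nth_butlast)
    qed
  qed
qed

lemma slot_slice:
  assumes "length l = Suc m" "p \<le> m"
    and T: "tperm (Transposition.transpose p m) u = (\<lambda>is. e * u is)"
  shows "(\<chi> j. u (l[p:=j])) = e *s slice u (butlast (permute_list (Transposition.transpose p m) l))"
proof -
  let ?t = "Transposition.transpose p m"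
  have "u (l[p:=j]) = e * u (butlast (permute_list ?t l) @ [j])" for j
  proof -
    have "u (l[p:=j]) = tperm ?t u (permute_list ?t (l[p:=j]))"
      unfolding tperm_def using pl_pl[of "l[p:=j]" m p] assms by simp
    also have "\<dots> = e * u (permute_list ?t (l[p:=j]))" using fun_cong[OF T] by blast
    finally show ?thesis using pl_upd[OF assms(1,2)] by simp
  qed
  then show ?thesis by (simp add: vec_eq_iff slice_def)
qed


lemma tprod_perm:
  assumes "\<sigma> permutes {..<k}"
  shows "tprod k g (permute_list (inv \<sigma>) is) = tprod k (g \<circ> \<sigma>) is"
proof (cases "length is = k")
  case True
  have Pi: "inv \<sigma> permutes {..<length is}" using permutes_inv[OF assms] True by simp
  have "(\<Prod>j<k. g j $ (permute_list (inv \<sigma>) is ! j)) = (\<Prod>j<k. g j $ (is ! inv \<sigma> j))"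
    using True by (intro prod.cong) (auto simp: permute_list_nth[OF Pi])
  also have "\<dots> = (\<Prod>j<k. (\<lambda>j. g (\<sigma> j) $ (is ! j)) (inv \<sigma> j))"
    by (intro prod.cong) (auto simp: permutes_inverses[OF assms])
  also have "\<dots> = (\<Prod>j<k. g (\<sigma> j) $ (is ! j))"
    using prod.permute[OF permutes_inv[OF assms], of "\<lambda>j. g (\<sigma> j) $ (is ! j)"] by (simp add: o_def)
  finally show ?thesis using True by (simp add: tprod_def)
qed (simp add: tprod_def)

lemma tpow_sym: "tpow k x \<in> sym_tens k"
  unfolding sym_tens_def tens_def
proof (safe)
  show "length is \<noteq> k \<Longrightarrow> tpow k x is = 0" for "is" by (simp add: tpow_def tprod_def)
  fix \<sigma> :: "nat \<Rightarrow> nat" assume s: "\<sigma> permutes {..<k}"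
  show "tperm \<sigma> (tpow k x) = tpow k x"
    unfolding tperm_def tpow_def fun_eq_iff using tprod_perm[OF s, of "\<lambda>_. x"] by (simp add: o_def)
qed

lemma wedge_tens: "wedge k s \<in> tens k"
  by (simp add: tens_def wedge_def tprod_def)

lemma wedge_asym: "wedge k s \<in> asym_tens k"
  unfolding asym_tens_def
proof (safe)
  show "wedge k s \<in> tens k" by (rule wedge_tens)
  fix \<tau> :: "nat \<Rightarrow> nat" assume t: "\<tau> permutes {..<k}"
  have pt: "permutation \<tau>" using permutes_imp_permutation[OF _ t] by simp
  let ?P = "{\<sigma>. \<sigma> permutes {..<k}}"
  show "tperm \<tau> (wedge k s) = (\<lambda>is. of_int (sign \<tau>) * wedge k s is)"
  proof
    fix "is" :: "'a list"
    have "(\<Sum>\<sigma>\<in>?P. of_int (sign \<sigma>) * tprod k (s \<circ> \<sigma>) is)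
        = (\<Sum>\<sigma>\<in>?P. of_int (sign (\<sigma> \<circ> \<tau>)) * tprod k (s \<circ> (\<sigma> \<circ> \<tau>)) is)"
      by (rule sum_permutations_compose_right[OF t])
    also have "\<dots> = (\<Sum>\<sigma>\<in>?P. of_int (sign \<tau>) * (of_int (sign \<sigma>) * tprod k (s \<circ> \<sigma> \<circ> \<tau>) is))"
    proof (intro sum.cong refl)
      fix \<sigma> assume "\<sigma> \<in> ?P"
      then have "permutation \<sigma>" using permutes_imp_permutation[of "{..<k}" \<sigma>] by simp
      then show "of_int (sign (\<sigma> \<circ> \<tau>)) * tprod k (s \<circ> (\<sigma> \<circ> \<tau>)) is = of_int (sign \<tau>) * (of_int (sign \<sigma>) * tprod k (s \<circ> \<sigma> \<circ> \<tau>) is)"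
        using pt by (simp add: sign_compose o_assoc)
    qed
    finally have e: "(\<Sum>\<sigma>\<in>?P. of_int (sign \<sigma>) * tprod k (s \<circ> \<sigma>) is)
        = of_int (sign \<tau>) * (\<Sum>\<sigma>\<in>?P. of_int (sign \<sigma>) * tprod k (s \<circ> \<sigma> \<circ> \<tau>) is)"
      by (simp add: sum_distrib_left)
    have "tperm \<tau> (wedge k s) is = (1 / of_nat (fact k)) * (\<Sum>\<sigma>\<in>?P. of_int (sign \<sigma>) * tprod k (s \<circ> \<sigma> \<circ> \<tau>) is)"
      unfolding tperm_def wedge_def by (intro arg_cong2[where f="(*)"] sum.cong refl) (simp add: tprod_perm[OF t])
    also have "\<dots> = of_int (sign \<tau>) * wedge k s is"
    proof -
      have st: "of_int (sign \<tau>) * of_int (sign \<tau>) = (1::complex)"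
        by (metis of_int_1 of_int_mult sign_idempotent)
      show ?thesis unfolding wedge_def e using st
        by (simp add: algebra_simps)
    qed
    finally show "tperm \<tau> (wedge k s) is = of_int (sign \<tau>) * wedge k s is" .
  qed
qed

lemma slice_scale: "slice (\<lambda>is. e * u is) is = e *s slice u is"
  by (simp add: slice_def vec_eq_iff)

lemma slice_tpow: assumes "length is = m"
  shows "slice (tpow (Suc m) x) is \<in> vec.span {x}"
  unfolding tpow_def slice_tprod[OF assms] by (rule vec.span_scale) (simp add: vec.span_base)

lemma slice_wedge: assumes "length is = m"
  shows "slice (wedge (Suc m) s) is \<in> vec.span (s ` {..<Suc m})"
proof -
  have "slice (wedge (Suc m) s) is = (1 / of_nat (fact (Suc m))) *s (\<Sum>\<sigma>\<in>{\<sigma>. \<sigma> permutes {..<Suc m}}.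
          of_int (sign \<sigma>) *s slice (tprod (Suc m) (s \<circ> \<sigma>)) is)"
    by (simp add: slice_def wedge_def vec_eq_iff sum_component)
  also have "\<dots> \<in> vec.span (s ` {..<Suc m})"
  proof (intro vec.span_scale vec.span_sum)
    fix \<sigma> assume "\<sigma> \<in> {\<sigma>. \<sigma> permutes {..<Suc m}}"
    then have "\<sigma> m < Suc m" using permutes_in_image[of \<sigma> "{..<Suc m}" m] by auto
    then have "s (\<sigma> m) \<in> s ` {..<Suc m}" by blast
    then show "slice (tprod (Suc m) (s \<circ> \<sigma>)) is \<in> vec.span (s ` {..<Suc m})"
      unfolding slice_tprod[OF assms] by (intro vec.span_scale) (simp add: vec.span_base)
  qed
  finally show ?thesis .
qed

lemma dim_bound:
  assumes "\<And>is. length is = m \<Longrightarrow> slice u is \<in> vec.span S" "finite S"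
  shows "vec.dim (W (Suc m) u) \<le> card S"
proof -
  have "W (Suc m) u \<subseteq> vec.span S" by (rule W_sub) (use assms in \<open>auto simp: idx_def\<close>)
  then show ?thesis using vec.dim_le_card assms(2) by blast
qed

lemma srank_tpow: "srank (Suc m) (tpow (Suc m) x) \<le> 1"
proof (rule srank_le)
  fix \<sigma> assume "\<sigma> permutes {..<Suc m}"
  then have "tperm \<sigma> (tpow (Suc m) x) = tpow (Suc m) x" using tpow_sym by (auto simp: sym_tens_def)
  have "vec.dim (W (Suc m) (tpow (Suc m) x)) \<le> card {x}"
    by (rule dim_bound) (auto intro: slice_tpow)
  then show "vec.dim (W (Suc m) (tperm \<sigma> (tpow (Suc m) x))) \<le> 1"
    using \<open>tperm \<sigma> (tpow (Suc m) x) = tpow (Suc m) x\<close> by simp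
qed

lemma srank_wedge: "srank (Suc m) (wedge (Suc m) s) \<le> Suc m"
proof (rule srank_le)
  fix \<sigma> assume "\<sigma> permutes {..<Suc m}"
  then have e: "tperm \<sigma> (wedge (Suc m) s) = (\<lambda>is. of_int (sign \<sigma>) * wedge (Suc m) s is)"
    using wedge_asym by (auto simp: asym_tens_def)
  have "vec.dim (W (Suc m) (tperm \<sigma> (wedge (Suc m) s))) \<le> card (s ` {..<Suc m})"
    unfolding e by (rule dim_bound) (auto simp: slice_scale intro!: vec.span_scale slice_wedge)
  also have "\<dots> \<le> Suc m" using card_image_le[of "{..<Suc m}" s] by simp
  finally show "vec.dim (W (Suc m) (tperm \<sigma> (wedge (Suc m) s))) \<le> Suc m" .
qed




lemma pl_transpose_same: assumes "length l = k" "a < k" "b < k" "l ! a = l ! b"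
  shows "permute_list (Transposition.transpose a b) l = l"
proof -
  have P: "Transposition.transpose a b permutes {..<length l}" using assms by (intro permutes_swap_id) auto
  show ?thesis
    by (rule nth_equalityI) (use assms in \<open>auto simp: permute_list_nth[OF P] Transposition.transpose_def\<close>)
qed

lemma asym_repeat:
  assumes u: "u \<in> asym_tens k" and l: "length l = k" "a < k" "b < k" "a \<noteq> b" "l ! a = l ! b"
  shows "u l = 0"
proof -
  let ?t = "Transposition.transpose a b"
  have P: "?t permutes {..<k}" using l by (intro permutes_swap_id) auto
  have "tperm ?t u l = of_int (sign ?t) * u l" using u P by (auto simp: asym_tens_def)
  moreover have "tperm ?t u l = u l" unfolding tperm_def using pl_transpose_same[OF l(1,2,3,5)] by simp
  ultimately have "u l = - u l" using l by (simp add: sign_swap_id)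
  then show ?thesis by simp
qed

lemma asym_distinct: assumes "u \<in> asym_tens k" "length l = k" "u l \<noteq> 0" shows "distinct l"
  using asym_repeat[OF assms(1,2)] assms(2,3) by (auto simp: distinct_conv_nth)

lemma asym_perm_zero:
  assumes u: "u \<in> asym_tens k" and "u l0 = 0" "length l0 = k" "mset l = mset l0"
  shows "u l = 0"
proof -
  obtain p where p: "p permutes {..<length l0}" "permute_list p l0 = l"
    using mset_eq_permutation[OF assms(4)] by blast
  have ip: "inv p permutes {..<k}" using permutes_inv[OF p(1)] assms(3) by simp
  have "tperm (inv p) u l0 = of_int (sign (inv p)) * u l0" using u ip by (auto simp: asym_tens_def)
  moreover have "inv (inv p) = p" using p(1) by (simp add: permutes_inv_inv)
  ultimately show ?thesis using p assms(2) by (simp add: tperm_def)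
qed



lemma eval_diag:
  fixes s :: "nat \<Rightarrow> complex^'n::finite"
  assumes D: "\<And>q q'. q < n \<Longrightarrow> q' < n \<Longrightarrow> s q $ i q' = (if q = q' then d q else 0)" and "q' < n"
  shows "(\<Sum>q<n. a q *s s q) $ i q' = a q' * d q'"
proof -
  have "(\<Sum>q<n. a q *s s q) $ i q' = (\<Sum>q<n. a q * (s q $ i q'))" by (simp add: sum_component)
  also have "\<dots> = (\<Sum>q<n. if q = q' then a q * d q else 0)" by (rule sum.cong) (use assms(2) in \<open>auto simp: D\<close>)
  also have "\<dots> = a q' * d q'" using assms(2) by simp
  finally show ?thesis .
qed

lemma diag_inj:
  fixes s :: "nat \<Rightarrow> complex^'n::finite"
  assumes D: "\<And>q q'. q < n \<Longrightarrow> q' < n \<Longrightarrow> s q $ i q' = (if q = q' then d q else 0)"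
    and dnz: "\<And>q. q < n \<Longrightarrow> d q \<noteq> 0"
  shows "inj_on s {..<n}"
proof
  fix q q' assume a: "q \<in> {..<n}" "q' \<in> {..<n}" "s q = s q'"
  have "s q' $ i q = d q" using D[of q q] a by simp
  moreover have "s q' $ i q = (if q' = q then d q' else 0)" using D[of q' q] a by simp
  ultimately show "q = q'" using dnz[of q] a by (cases "q = q'") auto
qed

lemma diag_repr:
  fixes s :: "nat \<Rightarrow> complex^'n::finite"
  assumes D: "\<And>q q'. q < n \<Longrightarrow> q' < n \<Longrightarrow> s q $ i q' = (if q = q' then d q else 0)"
    and dnz: "\<And>q. q < n \<Longrightarrow> d q \<noteq> 0"
    and v: "v \<in> vec.span (s ` {..<n})"
  shows "v = (\<Sum>q<n. (v $ i q / d q) *s s q)"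
proof -
  have inj: "inj_on s {..<n}" by (rule diag_inj[OF D dnz])
  have fin: "finite (s ` {..<n})" by simp
  obtain c where c: "v = (\<Sum>w\<in>s ` {..<n}. c w *s w)" using v vec.span_finite[OF fin] by auto
  then have c': "v = (\<Sum>q<n. c (s q) *s s q)" by (simp add: sum.reindex[OF inj])
  have ev: "v $ i q = c (s q) * d q" if "q < n" for q
    by (subst c') (rule eval_diag[OF D that])
  have "(\<Sum>q<n. c (s q) *s s q) = (\<Sum>q<n. (v $ i q / d q) *s s q)"
  proof (rule sum.cong)
    fix q assume "q \<in> {..<n}"
    then have "c (s q) = v $ i q / d q" using ev[of q] dnz[of q] by (simp add: field_simps)
    then show "c (s q) *s s q = (v $ i q / d q) *s s q" by simp
  qed simp
  then show ?thesis by (rule trans[OF c'])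
qed

lemma diag_indep:
  fixes s :: "nat \<Rightarrow> complex^'n::finite"
  assumes D: "\<And>q q'. q < n \<Longrightarrow> q' < n \<Longrightarrow> s q $ i q' = (if q = q' then d q else 0)"
    and dnz: "\<And>q. q < n \<Longrightarrow> d q \<noteq> 0"
  shows "vec.independent (s ` {..<n})" "card (s ` {..<n}) = n"
proof -
  have inj: "inj_on s {..<n}" by (rule diag_inj[OF D dnz])
  then show "card (s ` {..<n}) = n" by (simp add: card_image)
  show "vec.independent (s ` {..<n})" unfolding vec.independent_explicit
  proof (intro conjI allI impI ballI)
    show "finite (s ` {..<n})" by simp
    fix c w assume z: "(\<Sum>v\<in>s ` {..<n}. c v *s v) = 0" and w: "w \<in> s ` {..<n}"
    then obtain q where q: "q < n" "w = s q" by auto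
    have "(\<Sum>q<n. c (s q) *s s q) = 0" using z by (simp add: sum.reindex[OF inj])
    then have "(\<Sum>q<n. c (s q) *s s q) $ i q = 0" by simp
    then show "c w = 0" using eval_diag[OF D q(1), of "\<lambda>q. c (s q)"] dnz[OF q(1)] q by simp
  qed
qed



lemma vanish:
  fixes y :: "('n::finite) tensor" and s :: "nat \<Rightarrow> complex^'n"
  assumes y: "y \<in> tens (Suc m)"
    and D: "\<And>q q'. q < n \<Longrightarrow> q' < n \<Longrightarrow> s q $ i q' = (if q = q' then d q else 0)"
    and dnz: "\<And>q. q < n \<Longrightarrow> d q \<noteq> 0"
    and slot: "\<And>l p. length l = Suc m \<Longrightarrow> p \<le> m \<Longrightarrow> (\<chi> j. y (l[p:=j])) \<in> vec.span (s ` {..<n})"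
    and base: "\<And>l. length l = Suc m \<Longrightarrow> set l \<subseteq> i ` {..<n} \<Longrightarrow> y l = 0"
  shows "y = (\<lambda>_. 0)"
proof -
  let ?B = "\<lambda>l. {p. p \<le> m \<and> l ! p \<notin> i ` {..<n}}"
  have main: "\<And>l. card (?B l) = N \<Longrightarrow> length l = Suc m \<Longrightarrow> y l = 0" for N
  proof (induction N rule: less_induct)
    case (less N)
    fix l :: "'n list" assume cN: "card (?B l) = N" and len: "length l = Suc m"
    show "y l = 0"
    proof (cases "?B l = {}")
      case True
      have "set l \<subseteq> i ` {..<n}"
      proof
        fix a assume "a \<in> set l"
        then obtain p where "p < Suc m" "l ! p = a" using len by (auto simp: in_set_conv_nth)
        then show "a \<in> i ` {..<n}" using True by auto
      qed
      then show ?thesis using base len by blast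
    next
      case False
      then obtain p where p: "p \<le> m" "l ! p \<notin> i ` {..<n}" by auto
      let ?v = "\<chi> j. y (l[p:=j])"
      have v0: "?v $ i q = 0" if "q < n" for q
      proof -
        have sub: "?B (l[p := i q]) \<subseteq> ?B l - {p}" using that len p by (auto simp: nth_list_update split: if_splits)
        have "?B l - {p} \<subset> ?B l" using p by auto
        moreover have fB: "finite (?B l)" by (rule finite_subset[of _ "{..m}"]) auto
        ultimately have "card (?B l - {p}) < card (?B l)" by (meson psubset_card_mono)
        moreover have "card (?B (l[p := i q])) \<le> card (?B l - {p})"
          using sub fB by (meson card_mono finite_Diff)
        ultimately have "card (?B (l[p := i q])) < N" using cN by linarith
        then have "y (l[p := i q]) = 0" using less.IH len by simp
        then show ?thesis by simp
      qed
      have "?v = (\<Sum>q<n. (?v $ i q / d q) *s s q)" by (rule diag_repr[OF D dnz slot[OF len p(1)]])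
      also have "\<dots> = 0" using v0 by simp
      finally have "?v $ (l ! p) = 0" by simp
      then show ?thesis using p len by simp
    qed
  qed
  show ?thesis
  proof
    fix l :: "'n list"
    show "y l = 0"
    proof (cases "length l = Suc m")
      case True then show ?thesis using main by blast
    next
      case False then show ?thesis using y by (simp add: tens_def)
    qed
  qed
qed



lemma nz_witness: assumes "u \<in> tens k" "u \<noteq> (\<lambda>_. 0)" obtains l where "length l = k" "u l \<noteq> 0"
  using assms by (auto simp: tens_def fun_eq_iff)

lemma sym_slot: assumes "u \<in> sym_tens (Suc m)" "length l = Suc m" "p \<le> m"
  shows "(\<chi> j. u (l[p:=j])) = slice u (butlast (permute_list (Transposition.transpose p m) l))"
proof -
  have "tperm (Transposition.transpose p m) u = (\<lambda>is. 1 * u is)"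
    using assms transpose_permutes[of p m] by (auto simp: sym_tens_def)
  from slot_slice[OF assms(2,3) this] show ?thesis by simp
qed

lemma asym_slot: assumes "u \<in> asym_tens (Suc m)" "length l = Suc m" "p \<le> m"
  shows "(\<chi> j. u (l[p:=j])) = of_int (sign (Transposition.transpose p m)) *s slice u (butlast (permute_list (Transposition.transpose p m) l))"
proof -
  have "tperm (Transposition.transpose p m) u = (\<lambda>is. of_int (sign (Transposition.transpose p m)) * u is)"
    using assms transpose_permutes[of p m] by (auto simp: asym_tens_def)
  from slot_slice[OF assms(2,3) this] show ?thesis .
qed

lemma slice_diff: "slice (\<lambda>is. x is - c * w is) is = slice x is - c *s slice w is"
  by (simp add: slice_def vec_eq_iff)

lemma tperm_diff: "tperm \<sigma> (\<lambda>is. x is - c * w is) = (\<lambda>is. tperm \<sigma> x is - c * tperm \<sigma> w is)"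
  by (simp add: tperm_def)

lemma tpow_nz: assumes "x \<noteq> 0" shows "tpow k x \<noteq> (\<lambda>_. 0)"
proof -
  obtain a where "x $ a \<noteq> 0" using assms by (auto simp: vec_eq_iff)
  moreover have "tpow k x (replicate k a) = (x $ a) ^ k" by (simp add: tpow_def tprod_def)
  ultimately show ?thesis by (metis power_not_zero)
qed

lemma pstate_scale: assumes "c \<noteq> 0" shows "pstate k (\<lambda>is. c * v is) = pstate k v"
proof -
  have t: "tnorm2 k (\<lambda>is. c * v is) = (cmod c)^2 * tnorm2 k v"
    by (simp add: tnorm2_def norm_mult power_mult_distrib sum_distrib_left)
  have cc: "c * cnj c = complex_of_real ((cmod c)^2)" by (metis complex_norm_square of_real_power)
  have nz: "c * cnj c \<noteq> 0" using assms by simp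
  show ?thesis unfolding pstate_def t fun_eq_iff
  proof (intro allI)
    fix "is" js
    have "c * v is * cnj (c * v js) / complex_of_real ((cmod c)\<^sup>2 * tnorm2 k v)
        = (c * cnj c) * (v is * cnj (v js)) / ((c * cnj c) * complex_of_real (tnorm2 k v))"
    proof -
      have den: "complex_of_real ((cmod c)^2 * tnorm2 k v) = (c * cnj c) * complex_of_real (tnorm2 k v)"
        by (simp only: of_real_mult cc)
      have num: "c * v is * cnj (c * v js) = (c*cnj c) * (v is * cnj (v js))" by (simp add: mult_ac)
      show ?thesis unfolding den num ..
    qed
    also have "\<dots> = v is * cnj (v js) / complex_of_real (tnorm2 k v)"
      using nz by (rule mult_divide_mult_cancel_left)
    finally show "c * v is * cnj (c * v js) / complex_of_real ((cmod c)\<^sup>2 * tnorm2 k v) =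
         v is * cnj (v js) / complex_of_real (tnorm2 k v)" .
  qed
qed

lemma bos_lower: assumes "u \<in> tens (Suc m)" "u \<noteq> (\<lambda>_. 0)"
  obtains t j0 where "t \<in> W (Suc m) u" "t $ j0 \<noteq> 0" "1 \<le> vec.dim (W (Suc m) u)"
proof -
  obtain l0 where l0: "length l0 = Suc m" "u l0 \<noteq> 0" using nz_witness[OF assms] by blast
  let ?t = "slice u (butlast l0)"
  have tW: "?t \<in> W (Suc m) u" by (rule slice_in_W) (use l0 in \<open>simp add: idx_def\<close>)
  have "butlast l0 @ [last l0] = l0" using l0 by (metis append_butlast_last_id list.size(3) nat.distinct(1))
  then have tj: "?t $ last l0 = u l0" by (simp add: slice_def)
  have "?t \<noteq> 0" using tj l0 by auto
  then have "card {?t} \<le> vec.dim (W (Suc m) u)"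
    by (intro vec.independent_card_le_dim) (use tW in auto)
  then show ?thesis by (intro that[OF tW, of "last l0"]) (use tj l0 in auto)
qed

lemma bos_structure:
  assumes x: "x \<in> sym_tens (Suc m)" "x \<noteq> (\<lambda>_. 0)" and dim: "vec.dim (W (Suc m) x) \<le> 1"
  shows "\<exists>t c. t \<noteq> 0 \<and> c \<noteq> 0 \<and> x = (\<lambda>is. c * tpow (Suc m) t is)"
proof -
  have xt: "x \<in> tens (Suc m)" using x by (simp add: sym_tens_def)
  obtain l0 where l0: "length l0 = Suc m" "x l0 \<noteq> 0" using nz_witness[OF xt x(2)] by blast
  define t where "t = slice x (butlast l0)"
  define j0 where "j0 = last l0"
  have tW: "t \<in> W (Suc m) x" unfolding t_def by (rule slice_in_W) (use l0 in \<open>simp add: idx_def\<close>)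
  have "butlast l0 @ [last l0] = l0" using l0 by (metis append_butlast_last_id list.size(3) nat.distinct(1))
  then have tj: "t $ j0 \<noteq> 0" using l0 by (simp add: slice_def t_def j0_def)
  let ?s = "\<lambda>_::nat. t" and ?i = "\<lambda>_::nat. j0" and ?d = "\<lambda>_::nat. t $ j0"
  have D: "\<And>q q'. q < 1 \<Longrightarrow> q' < 1 \<Longrightarrow> ?s q $ ?i q' = (if q = q' then ?d q else 0)" by (auto simp: less_Suc_eq)
  have dnz: "\<And>q. q < 1 \<Longrightarrow> ?d q \<noteq> 0" using tj by simp
  have S: "?s ` {..<1} = {t}" by auto
  have I: "vec.independent {t}" "card {t} = 1" using tj by auto
  have Wsp: "W (Suc m) x \<subseteq> vec.span {t}"
    by (rule vec.card_ge_dim_independent) (use I tW dim in auto)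
  define c where "c = x (replicate (Suc m) j0) / (t $ j0) ^ Suc m"
  define y where "y = (\<lambda>is. x is - c * tpow (Suc m) t is)"
  have yt: "y \<in> tens (Suc m)" using xt tpow_sym[of "Suc m" t] by (auto simp: y_def tens_def sym_tens_def)
  have ys: "y \<in> sym_tens (Suc m)" using x tpow_sym[of "Suc m" t] yt
    by (auto simp: sym_tens_def y_def tperm_diff)
  have slices: "slice y is \<in> vec.span {t}" if "length is = m" for "is"
  proof -
    have "slice x is \<in> vec.span {t}" using slice_in_W[of "is" "Suc m" x] that Wsp by (auto simp: idx_def)
    moreover have "slice (tpow (Suc m) t) is \<in> vec.span {t}" by (rule slice_tpow[OF that])
    ultimately show ?thesis unfolding y_def slice_diff by (intro vec.span_diff vec.span_scale)
  qed
  have "y = (\<lambda>_. 0)"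
  proof (rule vanish[where s="?s" and i="?i" and d="?d" and n=1, OF yt D dnz])
    fix l :: "'a list" and p assume "length l = Suc m" "p \<le> m"
    then show "(\<chi> j. y (l[p:=j])) \<in> vec.span (?s ` {..<1})"
      unfolding S sym_slot[OF ys \<open>length l = Suc m\<close> \<open>p \<le> m\<close>] by (intro slices) simp
  next
    fix l :: "'a list" assume l: "length l = Suc m" "set l \<subseteq> ?i ` {..<1}"
    then have "l = replicate (Suc m) j0" by (intro replicate_eqI) auto
    moreover have "tpow (Suc m) t (replicate (Suc m) j0) = (t $ j0) ^ Suc m"
      by (simp add: tpow_def tprod_def del: replicate_Suc)
    ultimately show "y l = 0" using tj by (simp add: y_def c_def)
  qed
  then have xe: "x = (\<lambda>is. c * tpow (Suc m) t is)" by (auto simp: y_def fun_eq_iff)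
  moreover have "c \<noteq> 0" using xe x(2) by auto
  moreover have "t \<noteq> 0" using tj by auto
  ultimately show ?thesis by blast
qed



lemma permutes_id_iff_fix: assumes "\<sigma> permutes {..<n}" "\<And>p. p < n \<Longrightarrow> \<sigma> p = p" shows "\<sigma> = id"
proof
  fix p show "\<sigma> p = id p"
    using assms permutes_not_in[OF assms(1), of p] by (cases "p < n") auto
qed

lemma asym_structure:
  fixes x :: "('n::finite) tensor"
  assumes x: "x \<in> asym_tens (Suc m)" "x \<noteq> (\<lambda>_. 0)"
  obtains s where "wedge (Suc m) s \<noteq> (\<lambda>_. 0)" "Suc m \<le> vec.dim (W (Suc m) x)"
    "vec.dim (W (Suc m) x) \<le> Suc m \<Longrightarrow> \<exists>c. c \<noteq> 0 \<and> x = (\<lambda>is. c * wedge (Suc m) s is)"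
proof -
  have xt: "x \<in> tens (Suc m)" using x by (simp add: asym_tens_def)
  obtain l0 where l0: "length l0 = Suc m" "x l0 \<noteq> 0" using nz_witness[OF xt x(2)] by blast
  have dl0: "distinct l0" by (rule asym_distinct[OF x(1) l0])
  define e where "e q = (of_int (sign (Transposition.transpose q m)) :: complex)" for q
  have e2: "e q * e q = 1" for q unfolding e_def by (metis of_int_1 of_int_mult sign_idempotent)
  define s where "s q = slice x (butlast (permute_list (Transposition.transpose q m) l0))" for q
  define i where "i q = l0 ! q" for q
  define d where "d q = e q * x l0" for q
  have sv: "s q $ j = e q * x (l0[q:=j])" if "q \<le> m" for q j
  proof -
    have "(\<chi> j. x (l0[q:=j])) $ j = (e q *s s q) $ j"
      using asym_slot[OF x(1) l0(1) that] unfolding e_def s_def by simp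
    then have "x (l0[q:=j]) = e q * s q $ j" by simp
    then have "e q * x (l0[q:=j]) = (e q * e q) * s q $ j" by (simp add: mult_ac)
    then show ?thesis using e2 by simp
  qed
  have D: "s q $ i q' = (if q = q' then d q else 0)" if "q < Suc m" "q' < Suc m" for q q'
  proof (cases "q = q'")
    case True then show ?thesis using that sv[of q] by (simp add: i_def d_def)
  next
    case False
    have "x (l0[q := l0 ! q']) = 0"
      by (rule asym_repeat[OF x(1), of _ q q']) (use that False l0 in \<open>auto simp: nth_list_update\<close>)
    then show ?thesis using False that sv[of q] by (simp add: i_def)
  qed
  have dnz: "d q \<noteq> 0" if "q < Suc m" for q using e2[of q] l0 by (auto simp: d_def)
  have sW: "s q \<in> W (Suc m) x" if "q < Suc m" for q
    unfolding s_def by (rule slice_in_W) (use l0 in \<open>simp add: idx_def\<close>)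
  have ind: "vec.independent (s ` {..<Suc m})" "card (s ` {..<Suc m}) = Suc m"
    using diag_indep[where s=s and i=i and d=d and n="Suc m"] D dnz by auto
  have low: "Suc m \<le> vec.dim (W (Suc m) x)"
    using vec.independent_card_le_dim[of "s ` {..<Suc m}" "W (Suc m) x"] ind sW by auto
  define w where "w = wedge (Suc m) s"
  let ?P = "{\<sigma>. \<sigma> permutes {..<Suc m}}"
  have tp: "of_int (sign \<sigma>) * tprod (Suc m) (s \<circ> \<sigma>) l0 = (if \<sigma> = id then (\<Prod>p<Suc m. d p) else 0)"
    if sP: "\<sigma> \<in> ?P" for \<sigma>
  proof (cases "\<sigma> = id")
    case True
    have "(\<Prod>p<Suc m. s p $ (l0 ! p)) = (\<Prod>p<Suc m. d p)"
      by (rule prod.cong) (use D in \<open>auto simp: i_def\<close>)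
    then show ?thesis using True l0 by (simp add: tprod_def sign_id)
  next
    case False
    then obtain p where p: "p < Suc m" "\<sigma> p \<noteq> p" using permutes_id_iff_fix[of \<sigma> "Suc m"] sP by auto
    have "\<sigma> p < Suc m" using permutes_in_image[of \<sigma> "{..<Suc m}" p] sP p by auto
    then have "s (\<sigma> p) $ (l0 ! p) = 0" using D[of "\<sigma> p" p] p by (simp add: i_def)
    then have "(\<Prod>j<Suc m. (s \<circ> \<sigma>) j $ (l0 ! j)) = 0" using p by (intro prod_zero) auto
    then show ?thesis using False l0 by (simp add: tprod_def)
  qed
  have wl0: "w l0 = (1 / of_nat (fact (Suc m))) * (\<Prod>p<Suc m. d p)"
  proof -
    have "(\<Sum>\<sigma>\<in>?P. of_int (sign \<sigma>) * tprod (Suc m) (s \<circ> \<sigma>) l0) = (\<Sum>\<sigma>\<in>?P. if \<sigma> = id then (\<Prod>p<Suc m. d p) else 0)"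
      by (rule sum.cong) (use tp in auto)
    also have "\<dots> = (\<Prod>p<Suc m. d p)" using permutes_id[of "{..<Suc m}"] by (simp add: finite_permutations)
    finally show ?thesis by (simp add: w_def wedge_def)
  qed
  have wnz: "w l0 \<noteq> 0" unfolding wl0 using dnz by (simp del: fact_Suc)
  have part3: "\<exists>c. c \<noteq> 0 \<and> x = (\<lambda>is. c * wedge (Suc m) s is)" if dim: "vec.dim (W (Suc m) x) \<le> Suc m"
  proof -
    have Wsp: "W (Suc m) x \<subseteq> vec.span (s ` {..<Suc m})"
      by (rule vec.card_ge_dim_independent) (use ind sW dim in auto)
    define c where "c = x l0 / w l0"
    define y where "y = (\<lambda>is. x is - c * w is)"
    have wa: "w \<in> asym_tens (Suc m)" unfolding w_def by (rule wedge_asym)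
    have yt: "y \<in> tens (Suc m)" using xt wa by (auto simp: y_def tens_def asym_tens_def)
    have ya: "y \<in> asym_tens (Suc m)" using x(1) wa yt
      by (auto simp: asym_tens_def y_def tperm_diff algebra_simps)
    have slices: "slice y is \<in> vec.span (s ` {..<Suc m})" if "length is = m" for "is"
    proof -
      have "slice x is \<in> vec.span (s ` {..<Suc m})" using slice_in_W[of "is" "Suc m" x] that Wsp by (auto simp: idx_def)
      moreover have "slice w is \<in> vec.span (s ` {..<Suc m})" unfolding w_def by (rule slice_wedge[OF that])
      ultimately show ?thesis unfolding y_def slice_diff by (intro vec.span_diff vec.span_scale)
    qed
    have yl0: "y l0 = 0" using wnz by (simp add: y_def c_def)
    have iset: "i ` {..<Suc m} = set l0" using l0 by (auto simp: i_def set_conv_nth)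
    have "y = (\<lambda>_. 0)"
    proof (rule vanish[where s=s and i=i and d=d and n="Suc m", OF yt])
      show "\<And>q q'. q < Suc m \<Longrightarrow> q' < Suc m \<Longrightarrow> s q $ i q' = (if q = q' then d q else 0)" by (rule D)
      show "\<And>q. q < Suc m \<Longrightarrow> d q \<noteq> 0" by (rule dnz)
    next
      fix l :: "'n list" and p assume "length l = Suc m" "p \<le> m"
      then show "(\<chi> j. y (l[p:=j])) \<in> vec.span (s ` {..<Suc m})"
        unfolding asym_slot[OF ya \<open>length l = Suc m\<close> \<open>p \<le> m\<close>] by (intro vec.span_scale slices) simp
    next
      fix l :: "'n list" assume l: "length l = Suc m" "set l \<subseteq> i ` {..<Suc m}"
      show "y l = 0"
      proof (cases "distinct l")
        case True
        have "card (set l) = card (set l0)" using True dl0 l0 l by (simp add: distinct_card)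
        then have "set l = set l0" using l iset by (intro card_subset_eq) auto
        then have "mset l = mset l0" using True dl0 set_eq_iff_mset_eq_distinct by blast
        then show ?thesis using asym_perm_zero[OF ya yl0 l0(1)] by simp
      next
        case False
        then obtain a b where ab: "a < length l" "b < length l" "a \<noteq> b" "l ! a = l ! b"
          by (auto simp: distinct_conv_nth)
        show ?thesis by (rule asym_repeat[OF ya l(1), of a b]) (use ab l in auto)
      qed
    qed
    then have xe: "x = (\<lambda>is. c * w is)" by (auto simp: y_def fun_eq_iff)
    moreover have "c \<noteq> 0" using xe x(2) by auto
    ultimately show ?thesis unfolding w_def by blast
  qed
  show ?thesis
  proof (rule that[of s])
    show "wedge (Suc m) s \<noteq> (\<lambda>_. 0)" using wnz unfolding w_def by auto
  qed (use low part3 in auto)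
qed



lemma bos_eq: "simple_bos_pure (Suc m) \<rho> \<longleftrightarrow> \<rho> \<in> (seg_sym_range (Suc m) :: ('n::finite) tmatrix set)"
proof
  assume "simple_bos_pure (Suc m) \<rho>"
  then obtain x :: "'n tensor" where x: "simple_sym (Suc m) x" "\<rho> = pstate (Suc m) x"
    by (auto simp: simple_bos_pure_def)
  define e :: "complex^'n" where "e = (\<chi> _. 1)"
  have enz: "e \<noteq> 0" by (simp add: e_def vec_eq_iff)
  have "srank (Suc m) x \<le> srank (Suc m) (tpow (Suc m) e)"
    using x(1) tpow_sym[of "Suc m" e] tpow_nz[OF enz] by (auto simp: simple_sym_def)
  also have "\<dots> \<le> 1" by (rule srank_tpow)
  finally have "vec.dim (W (Suc m) x) \<le> 1" using srank_ge[of "Suc m" x] by linarith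
  then obtain t c where tc: "t \<noteq> 0" "c \<noteq> 0" "x = (\<lambda>is. c * tpow (Suc m) t is)"
    using bos_structure[of x m] x(1) by (auto simp: simple_sym_def)
  then have "\<rho> = pstate (Suc m) (tpow (Suc m) t)" using x(2) pstate_scale by simp
  then show "\<rho> \<in> seg_sym_range (Suc m)" using tc(1) by (auto simp: seg_sym_range_def)
next
  assume "\<rho> \<in> seg_sym_range (Suc m)"
  then obtain x :: "complex^'n" where x: "x \<noteq> 0" "\<rho> = pstate (Suc m) (tpow (Suc m) x)"
    by (auto simp: seg_sym_range_def)
  have "simple_sym (Suc m) (tpow (Suc m) x)"
    unfolding simple_sym_def
  proof (intro conjI ballI impI)
    show "tpow (Suc m) x \<in> sym_tens (Suc m)" by (rule tpow_sym)
    show "tpow (Suc m) x \<noteq> (\<lambda>_. 0)" by (rule tpow_nz[OF x(1)])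
    fix v :: "'n tensor" assume v: "v \<in> sym_tens (Suc m)" "v \<noteq> (\<lambda>_. 0)"
    have "1 \<le> vec.dim (W (Suc m) v)"
      by (rule bos_lower[of v m]) (use v in \<open>auto simp: sym_tens_def\<close>)
    then show "srank (Suc m) (tpow (Suc m) x) \<le> srank (Suc m) v"
      using srank_tpow[of m x] srank_ge[of "Suc m" v] by linarith
  qed
  then show "simple_bos_pure (Suc m) \<rho>" using x(2) by (auto simp: simple_bos_pure_def)
qed

lemma ferm_eq: "simple_ferm_pure (Suc m) \<rho> \<longleftrightarrow> \<rho> \<in> (seg_asym_range (Suc m) :: ('n::finite) tmatrix set)"
proof
  assume "simple_ferm_pure (Suc m) \<rho>"
  then obtain x :: "'n tensor" where x: "simple_asym (Suc m) x" "\<rho> = pstate (Suc m) x"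
    by (auto simp: simple_ferm_pure_def)
  have xa: "x \<in> asym_tens (Suc m)" "x \<noteq> (\<lambda>_. 0)" using x(1) by (auto simp: simple_asym_def)
  obtain s where s: "wedge (Suc m) s \<noteq> (\<lambda>_. 0)"
    "vec.dim (W (Suc m) x) \<le> Suc m \<Longrightarrow> \<exists>c. c \<noteq> 0 \<and> x = (\<lambda>is. c * wedge (Suc m) s is)"
    using asym_structure[OF xa] by metis
  have "srank (Suc m) x \<le> srank (Suc m) (wedge (Suc m) s)"
    using x(1) wedge_asym[of "Suc m" s] s(1) by (auto simp: simple_asym_def)
  also have "\<dots> \<le> Suc m" by (rule srank_wedge)
  finally have "vec.dim (W (Suc m) x) \<le> Suc m" using srank_ge[of "Suc m" x] by linarith
  then obtain c where c: "c \<noteq> 0" "x = (\<lambda>is. c * wedge (Suc m) s is)" using s(2) by blast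
  then have "\<rho> = pstate (Suc m) (wedge (Suc m) s)" using x(2) pstate_scale by simp
  then show "\<rho> \<in> seg_asym_range (Suc m)" using s(1) by (auto simp: seg_asym_range_def)
next
  assume "\<rho> \<in> seg_asym_range (Suc m)"
  then obtain xs :: "nat \<Rightarrow> complex^'n" where x: "wedge (Suc m) xs \<noteq> (\<lambda>_. 0)" "\<rho> = pstate (Suc m) (wedge (Suc m) xs)"
    by (auto simp: seg_asym_range_def)
  have "simple_asym (Suc m) (wedge (Suc m) xs)"
    unfolding simple_asym_def
  proof (intro conjI ballI impI)
    show "wedge (Suc m) xs \<in> asym_tens (Suc m)" by (rule wedge_asym)
    show "wedge (Suc m) xs \<noteq> (\<lambda>_. 0)" by (rule x(1))
    fix v :: "'n tensor" assume v: "v \<in> asym_tens (Suc m)" "v \<noteq> (\<lambda>_. 0)"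
    obtain s where "Suc m \<le> vec.dim (W (Suc m) v)" using asym_structure[OF v] by metis
    then show "srank (Suc m) (wedge (Suc m) xs) \<le> srank (Suc m) v"
      using srank_wedge[of m xs] srank_ge[of "Suc m" v] by linarith
  qed
  then show "simple_ferm_pure (Suc m) \<rho>" using x(2) by (auto simp: simple_ferm_pure_def)
qed

theorem mainTheorem1:
  fixes k :: nat
  assumes "k \<ge> 2"
  shows "(\<forall>\<rho> :: ('n::finite) tmatrix. bos_pure k \<rho> \<longrightarrow>
            (\<not> simple_bos_pure k \<rho> \<longleftrightarrow> \<rho> \<notin> seg_sym_range k))
       \<and> (\<forall>\<rho> :: 'n tmatrix. ferm_pure k \<rho> \<longrightarrow>
            (\<not> simple_ferm_pure k \<rho> \<longleftrightarrow> \<rho> \<notin> seg_asym_range k))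
       \<and> (\<forall>\<rho> :: 'n tmatrix. bos_mixed k \<rho> \<longrightarrow>
            (\<not> simple_bos_mixed k \<rho> \<longleftrightarrow> \<rho> \<notin> cconv (seg_sym_range k)))
       \<and> (\<forall>\<rho> :: 'n tmatrix. ferm_mixed k \<rho> \<longrightarrow>
            (\<not> simple_ferm_mixed k \<rho> \<longleftrightarrow> \<rho> \<notin> cconv (seg_asym_range k)))"
proof -
  obtain m where k: "k = Suc m" using assms by (cases k) auto
  have B: "{\<sigma>. simple_bos_pure k \<sigma>} = (seg_sym_range k :: 'n tmatrix set)"
    unfolding k using bos_eq by blast
  have F: "{\<sigma>. simple_ferm_pure k \<sigma>} = (seg_asym_range k :: 'n tmatrix set)"
    unfolding k using ferm_eq by blast
  show ?thesis
    unfolding simple_bos_mixed_def simple_ferm_mixed_def B F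
    using B F by blast
qed


end
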